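(* Let $q$ be a prime power and $h,m\ge1$. Suppose that every pair $(f,g)$ of invertible $\mathbb F_q$-linearised polynomials over $\mathbb F_{q^h}$ satisfying property $(Prop_m)$ consists of monomials. Then every $\mathbb F_q$-linear $(n,q^{3h},n-2)_{q^h}$ code $C$ over $\mathbb F_{q^h}$ with $n\ge 3+m$ which has at least three coordinates from which the projections are $\mathbb F_q$-equivalent to linear codes is itself $\mathbb F_q$-equivalent to a linear code.
   Context: An $\mathbb F_q$-linearised polynomial over $\mathbb F_{q^h}$ is $\sum_{l=0}^{h-1}a_lX^{q^l}$ with $a_l\in\mathbb F_{q^h}$, viewed as a map of $\mathbb F_{q^h}$; invertible means bijective; a monomial is one with exactly one nonzero coefficient. Identities $\equiv$ between such polynomials mean equality as maps. Property $(Prop_m)$: $(f,g)$ satisfies it if there exist triples $(a_j,b_j,c_j)\in(\mathbb F_{q^h}^* )^3$, $1\le j\le m$, with $(a_1,b_1,c_1)=(1,1,1)$, such that $a_jf(b_jf^{-1}(X))\equiv g(c_jg^{-1}(X))$ for every $j$, and for all $i\ne j$: $a_i\ne a_j$, $b_i\ne b_j$, $c_i\ne c_j$. An $\mathbb F_q$-linear code over $\mathbb F_{q^h}$ is an $\mathbb F_q$-subspace of $\mathbb F_{q^h}^n$; an $(n,M,d)_{q^h}$ code has $M$ codewords and minimum distance $d$; linear means $\mathbb F_{q^h}$-linear. Two $\mathbb F_q$-linear codes are $\mathbb F_q$-equivalent if one is obtained from the other by permuting coordinates and applying in each coordinate an $\mathbb F_q$-linear bijection of $\mathbb F_{q^h}$.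 The projection of $C$ from position $i$ is $\{(x_1,\dots,x_{i-1},x_{i+1},\dots,x_n):(x_1,\dots,x_{i-1},0,x_{i+1},\dots,x_n)\in C\}$. *)

theory Defs
  imports Main "HOL-Computational_Algebra.Primes" "HOL-Combinatorics.Permutations"
begin

(* Ambient field F_{q^h} is a finite field type 'a with CARD('a) = q^h.
   The subfield F_q is the set of roots of X^q - X. *)
definition Fq :: "nat \<Rightarrow> 'a::{finite,field} set" where
  "Fq q = {x. x ^ q = x}"

definition prime_power :: "nat \<Rightarrow> bool" where
  "prime_power q \<longleftrightarrow> (\<exists>p k. prime p \<and> k \<ge> 1 \<and> q = p ^ k)"

(* F_q-linearised polynomial sum_{l<h} a_l X^{q^l}, given by its coefficients *)
definition lin_eval :: "nat \<Rightarrow> nat \<Rightarrow> (nat \<Rightarrow> 'a::{finite,field}) \<Rightarrow> 'a \<Rightarrow> 'a" where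
  "lin_eval q h a x = (\<Sum>l<h. a l * x ^ (q ^ l))"

definition lin_invertible :: "nat \<Rightarrow> nat \<Rightarrow> (nat \<Rightarrow> 'a::{finite,field}) \<Rightarrow> bool" where
  "lin_invertible q h a \<longleftrightarrow> bij (lin_eval q h a)"

definition lin_monomial :: "nat \<Rightarrow> (nat \<Rightarrow> 'a::{finite,field}) \<Rightarrow> bool" where
  "lin_monomial h a \<longleftrightarrow> card {l. l < h \<and> a l \<noteq> 0} = 1"

definition Prop :: "nat \<Rightarrow> nat \<Rightarrow> nat \<Rightarrow> (nat \<Rightarrow> 'a::{finite,field}) \<Rightarrow> (nat \<Rightarrow> 'a) \<Rightarrow> bool" where
  "Prop q h m f g \<longleftrightarrow>
     (\<exists>A B C :: nat \<Rightarrow> 'a.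
        (\<forall>j\<in>{1..m}. A j \<noteq> 0 \<and> B j \<noteq> 0 \<and> C j \<noteq> 0) \<and>
        A 1 = 1 \<and> B 1 = 1 \<and> C 1 = 1 \<and>
        (\<forall>j\<in>{1..m}. \<forall>x.
           A j * lin_eval q h f (B j * inv (lin_eval q h f) x)
             = lin_eval q h g (C j * inv (lin_eval q h g) x)) \<and>
        inj_on A {1..m} \<and> inj_on B {1..m} \<and> inj_on C {1..m})"

definition Fq_linear_code :: "nat \<Rightarrow> nat \<Rightarrow> 'a::{finite,field} list set \<Rightarrow> bool" where
  "Fq_linear_code q n C \<longleftrightarrow>
     C \<subseteq> {x. length x = n} \<and> replicate n 0 \<in> C \<and>
     (\<forall>x\<in>C. \<forall>y\<in>C. map2 (+) x y \<in> C) \<and>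
     (\<forall>c\<in>Fq q. \<forall>x\<in>C. map (\<lambda>t. c * t) x \<in> C)"

definition linear_code :: "nat \<Rightarrow> 'a::{finite,field} list set \<Rightarrow> bool" where
  "linear_code n C \<longleftrightarrow>
     C \<subseteq> {x. length x = n} \<and> replicate n 0 \<in> C \<and>
     (\<forall>x\<in>C. \<forall>y\<in>C. map2 (+) x y \<in> C) \<and>
     (\<forall>c. \<forall>x\<in>C. map (\<lambda>t. c * t) x \<in> C)"

definition hamming :: "'a list \<Rightarrow> 'a list \<Rightarrow> nat" where
  "hamming x y = card {i. i < length x \<and> x ! i \<noteq> y ! i}"

definition min_dist :: "'a list set \<Rightarrow> nat" where
  "min_dist C = Min {hamming x y | x y. x \<in> C \<and> y \<in> C \<and> x \<noteq> y}"

definition Fq_lin_bij :: "nat \<Rightarrow> ('a::{finite,field} \<Rightarrow> 'a) \<Rightarrow> bool" where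
  "Fq_lin_bij q \<phi> \<longleftrightarrow> bij \<phi> \<and> (\<forall>x y. \<phi> (x + y) = \<phi> x + \<phi> y) \<and>
     (\<forall>c\<in>Fq q. \<forall>x. \<phi> (c * x) = c * \<phi> x)"

definition Fq_equiv :: "nat \<Rightarrow> nat \<Rightarrow> 'a::{finite,field} list set \<Rightarrow> 'a list set \<Rightarrow> bool" where
  "Fq_equiv q n C D \<longleftrightarrow>
     (\<exists>\<sigma> \<phi>. \<sigma> permutes {..<n} \<and> (\<forall>i<n. Fq_lin_bij q (\<phi> i)) \<and>
        D = (\<lambda>x. map (\<lambda>i. \<phi> i (x ! \<sigma> i)) [0..<n]) ` C)"

definition projection :: "nat \<Rightarrow> 'a::zero list set \<Rightarrow> 'a list set" where
  "projection i C = {take i x @ drop (Suc i) x | x. x \<in> C \<and> x ! i = 0}"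

end

theory Submission
  imports Defs "HOL-Computational_Algebra.Polynomial" "HOL-Library.FuncSet"
begin

lemma of_nat_card_UNIV_eq_0: "of_nat (card (UNIV :: 'a::{finite,ring_1} set)) = (0::'a)"
proof -
  have "(\<Sum>x\<in>UNIV. x) = (\<Sum>x\<in>UNIV. (x + 1::'a))"
    by (rule sum.reindex_bij_witness[of _ "\<lambda>y. y + 1" "\<lambda>y. y - 1"]) auto
  also have "\<dots> = (\<Sum>x\<in>UNIV. x) + of_nat (card (UNIV :: 'a set))"
    by (simp add: sum.distrib)
  finally show ?thesis by (metis add_cancel_left_right)
qed

lemma power_card_eq_same:
  fixes x :: "'a :: {finite,field}"
  shows   "x ^ card (UNIV :: 'a set) = x"
proof (cases "x = 0")
  case False
  have "x * (\<Prod>y\<in>UNIV-{0}. x * y) = x * x ^ (card (UNIV :: 'a set) - 1) * \<Prod>(UNIV-{0})"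
    by (simp add: prod.distrib mult_ac)
  also have "x * x ^ (card (UNIV :: 'a set) - 1) = x ^ Suc (card (UNIV :: 'a set) - 1)"
    by (subst power_Suc) auto
  also have "Suc (card (UNIV :: 'a set) - 1) = card (UNIV :: 'a set)"
    using finite_UNIV_card_ge_0[where ?'a = 'a] by simp
  also have "(\<Prod>y\<in>UNIV-{0}. x * y) = (\<Prod>y\<in>UNIV-{0}. y)"
    by (rule prod.reindex_bij_witness[of _ "\<lambda>y. y / x" "\<lambda>y. x * y"]) (use False in auto)
  finally show ?thesis
    by simp
qed (use finite_UNIV_card_ge_0[where ?'a = 'a] in auto)

locale ffset =
  fixes q h :: nat and ty :: "'a::{finite,field} itself"
  assumes pp: "prime_power q" and h1: "h \<ge> 1" and cardU: "card (UNIV :: 'a set) = q ^ h"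
begin

lemma q_ge2: "q \<ge> 2"
proof -
  obtain p k where p: "prime p" "k \<ge> 1" "q = p ^ k" using pp unfolding prime_power_def by blast
  have "p \<le> p ^ k" using p prime_ge_2_nat[of p] by (intro self_le_power) auto
  thus ?thesis using p prime_ge_2_nat[of p] by simp
qed

lemma char_prime: "prime CHAR('a)"
  by (rule prime_CHAR_semidom) (simp add: finite_imp_CHAR_pos)

lemma q_char_pow: "\<exists>k. q = CHAR('a) ^ k"
proof -
  obtain p k where p: "prime p" "k \<ge> 1" "q = p ^ k" using pp unfolding prime_power_def by blast
  have "CHAR('a) dvd card (UNIV :: 'a set)"
    using of_nat_card_UNIV_eq_0[where 'a='a] of_nat_eq_0_iff_char_dvd by blast
  hence "CHAR('a) dvd p ^ (k * h)" using cardU p by (simp add: power_mult)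
  hence "CHAR('a) dvd p" using char_prime prime_dvd_power by blast
  hence "CHAR('a) = p" using char_prime p primes_dvd_imp_eq by blast
  thus ?thesis using p by blast
qed

lemma frob_add: "((x::'a) + y) ^ (q ^ l) = x ^ (q ^ l) + y ^ (q ^ l)"
proof -
  obtain k where k: "q = CHAR('a) ^ k" using q_char_pow by blast
  show ?thesis
    by (rule freshmans_dream'[OF char_prime]) (simp add: k power_mult[symmetric])
qed

lemma frob_add1: "((x::'a) + y) ^ q = x ^ q + y ^ q"
  using frob_add[of x y 1] by simp

lemma frob_minus: "(-(x::'a)) ^ (q ^ l) = - (x ^ (q ^ l))"
proof -
  have "(x + (-x)) ^ (q ^ l) = x ^ (q ^ l) + (-x) ^ (q ^ l)" by (rule frob_add)
  moreover have "(0::'a) ^ (q ^ l) = 0" using q_ge2 by simp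
  ultimately show ?thesis by (simp add: eq_neg_iff_add_eq_0 add.commute)
qed

abbreviation K where "K \<equiv> (Fq q :: 'a set)"

lemma K_0: "0 \<in> K" using q_ge2 by (simp add: Fq_def)
lemma K_1: "1 \<in> K" by (simp add: Fq_def)
lemma K_add: "a \<in> K \<Longrightarrow> b \<in> K \<Longrightarrow> a + b \<in> K"
  using frob_add1 by (simp add: Fq_def)
lemma K_mult: "a \<in> K \<Longrightarrow> b \<in> K \<Longrightarrow> a * b \<in> K"
  by (simp add: Fq_def power_mult_distrib)
lemma K_uminus: "a \<in> K \<Longrightarrow> - a \<in> K"
  using frob_minus[of a 1] by (simp add: Fq_def)
lemma K_minus: "a \<in> K \<Longrightarrow> b \<in> K \<Longrightarrow> a - b \<in> K"
  using K_add K_uminus by (metis diff_conv_add_uminus)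
lemma K_inverse: "a \<in> K \<Longrightarrow> inverse a \<in> K"
  by (simp add: Fq_def power_inverse)
lemma K_pow: "a \<in> K \<Longrightarrow> a ^ (q ^ l) = a"
proof (induction l)
  case (Suc l)
  have "a ^ (q ^ Suc l) = (a ^ (q ^ l)) ^ q" by (simp add: power_mult[symmetric] mult.commute)
  thus ?case using Suc by (simp add: Fq_def)
qed simp

lemma card_K_ge: "card K \<ge> q"
proof -
  define Q where "Q = card (UNIV :: 'a set)"
  have Qq: "Q = q ^ h" using cardU Q_def by simp
  have qQ: "q \<le> Q" unfolding Qq using h1 q_ge2 by (intro self_le_power) auto
  have dv: "(q - 1) dvd (Q - 1)"
  proof -
    have "int (q ^ h) - 1 = (int q - 1) * (\<Sum>i<h. int q ^ i)"
      using power_diff_1_eq[of "int q" h] by simp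
    hence "int (Q - 1) = int (q - 1) * (\<Sum>i<h. int q ^ i)"
      using qQ q_ge2 Qq by (simp add: of_nat_diff)
    hence "int (q - 1) dvd int (Q - 1)" by (metis dvd_triv_left)
    thus ?thesis by simp
  qed
  define t where "t = (Q - 1) div (q - 1)"
  have tQ: "(q - 1) * t = Q - 1" using dv t_def by simp
  have t1: "t \<ge> 1"
  proof (rule ccontr)
    assume "\<not> t \<ge> 1"
    hence "t = 0" by simp
    hence "Q - 1 = 0" using tQ by simp
    thus False using qQ q_ge2 by simp
  qed
  define P :: "'a poly" where "P = (\<Sum>i<t. monom 1 ((q - 1) * i))"
  have polyP: "poly P x = (\<Sum>i<t. (x ^ (q - 1)) ^ i)" for x
    by (simp add: P_def poly_sum poly_monom power_mult)
  have coeffP: "coeff P d = (\<Sum>i<t. if (q - 1) * i = d then 1 else 0)" for d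
    by (simp add: P_def coeff_sum coeff_monom)
  have "coeff P 0 = 1"
  proof -
    have "coeff P 0 = (\<Sum>i\<in>{0}. if (q - 1) * i = 0 then (1::'a) else 0)"
      unfolding coeffP using q_ge2 t1 by (intro sum.mono_neutral_right) auto
    thus ?thesis by simp
  qed
  hence P0: "P \<noteq> 0" by auto
  have degP: "degree P \<le> Q - q"
  proof (rule degree_le, intro allI impI)
    fix d assume d: "Q - q < d"
    have "(q - 1) * i \<noteq> d" if "i < t" for i
    proof -
      have "(q - 1) * i \<le> (q - 1) * (t - 1)" using that by (intro mult_le_mono2) simp
      also have "\<dots> = Q - q" using tQ t1 q_ge2 qQ by (simp add: diff_mult_distrib2)
      finally show ?thesis using d by simp
    qed
    thus "coeff P d = 0" unfolding coeffP by simp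
  qed
  have key: "(x ^ q - x) * poly P x = 0" for x :: 'a
  proof -
    have "x ^ q - x = x * (x ^ (q - 1) - 1)"
      using q_ge2 by (simp add: right_diff_distrib power_Suc[symmetric])
    hence "(x ^ q - x) * poly P x = x * ((x ^ (q - 1)) ^ t - 1)"
      using power_diff_1_eq[of "x ^ (q - 1)" t] by (simp add: polyP mult.assoc)
    also have "(x ^ (q - 1)) ^ t = x ^ (Q - 1)" by (simp only: power_mult[symmetric] tQ)
    also have "x * (x ^ (Q - 1) - 1) = x ^ Q - x"
      using qQ q_ge2 by (simp add: right_diff_distrib power_Suc[symmetric])
    also have "x ^ Q = x" unfolding Q_def by (rule power_card_eq_same)
    finally show ?thesis by simp
  qed
  have U: "UNIV = K \<union> {x. poly P x = 0}"
    using key by (auto simp: Fq_def)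
  have "Q \<le> card K + card {x. poly P x = 0}"
    unfolding Q_def using card_Un_le[of K "{x. poly P x = 0}"] by (simp only: U[symmetric])
  moreover have "card {x. poly P x = 0} \<le> Q - q"
    using card_poly_roots_bound[OF P0] degP by linarith
  ultimately show ?thesis using qQ by linarith
qed

end

context ffset
begin

definition span :: "(nat \<Rightarrow> 'a) \<Rightarrow> nat \<Rightarrow> 'a set" where
  "span e k = {\<Sum>i<k. c i * e i | c. \<forall>i<k. c i \<in> K}"

lemma span_0: "0 \<in> span e k"
  unfolding span_def using K_0 by (intro CollectI exI[of _ "\<lambda>_. 0"]) auto

lemma span_diff: "x \<in> span e k \<Longrightarrow> y \<in> span e k \<Longrightarrow> x - y \<in> span e k"
proof -
  assume "x \<in> span e k" "y \<in> span e k"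
  then obtain c d where c: "x = (\<Sum>i<k. c i * e i)" "\<forall>i<k. c i \<in> K"
    and d: "y = (\<Sum>i<k. d i * e i)" "\<forall>i<k. d i \<in> K" unfolding span_def by blast
  have "x - y = (\<Sum>i<k. (c i - d i) * e i)" using c d by (simp add: sum_subtractf left_diff_distrib)
  thus ?thesis unfolding span_def
    by (intro CollectI exI[of _ "\<lambda>i. c i - d i"]) (use c d K_minus in auto)
qed

lemma span_smult: "a \<in> K \<Longrightarrow> x \<in> span e k \<Longrightarrow> a * x \<in> span e k"
proof -
  assume a: "a \<in> K" and "x \<in> span e k"
  then obtain c where c: "x = (\<Sum>i<k. c i * e i)" "\<forall>i<k. c i \<in> K" unfolding span_def by blast
  have "a * x = (\<Sum>i<k. (a * c i) * e i)" using c by (simp add: sum_distrib_left mult.assoc)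
  thus ?thesis unfolding span_def
    by (intro CollectI exI[of _ "\<lambda>i. a * c i"]) (use c a K_mult in auto)
qed

lemma span_Suc: "a \<in> K \<Longrightarrow> x \<in> span e k \<Longrightarrow> a * e k + x \<in> span e (Suc k)"
proof -
  assume a: "a \<in> K" and "x \<in> span e k"
  then obtain c where c: "x = (\<Sum>i<k. c i * e i)" "\<forall>i<k. c i \<in> K" unfolding span_def by blast
  define c' where "c' = c(k := a)"
  have "(\<Sum>i<Suc k. c' i * e i) = (\<Sum>i<k. c' i * e i) + c' k * e k" by simp
  also have "(\<Sum>i<k. c' i * e i) = (\<Sum>i<k. c i * e i)" unfolding c'_def by (intro sum.cong) auto
  finally have "a * e k + x = (\<Sum>i<Suc k. c' i * e i)" using c by (simp add: c'_def add.commute)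
  moreover have "\<forall>i<Suc k. c' i \<in> K" using c a by (auto simp: c'_def less_Suc_eq)
  ultimately show ?thesis unfolding span_def by blast
qed

lemma span_mono: "span e k \<subseteq> span e (Suc k)"
  using span_Suc[of 0 _ e k] K_0 by auto

lemma span_cong: "(\<And>i. i < k \<Longrightarrow> e i = e' i) \<Longrightarrow> span e k = span e' k"
  unfolding span_def by (intro Collect_cong ex_cong1 conj_cong refl, rule arg_cong2[of _ _ _ _ "(=)"], simp, rule sum.cong) auto

lemma span_card_Suc:
  assumes "e k \<notin> span e k"
  shows "card K * card (span e k) \<le> card (span e (Suc k))"
proof -
  have "inj_on (\<lambda>(a, x). a * e k + x) (K \<times> span e k)"
  proof (rule inj_onI, clarify)
    fix a x b y assume ab: "a \<in> K" "x \<in> span e k" "b \<in> K" "y \<in> span e k"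
      and eq: "a * e k + x = b * e k + y"
    show "a = b \<and> x = y"
    proof (cases "a = b")
      case True thus ?thesis using eq by simp
    next
      case False
      have "(a - b) * e k = y - x" using eq by (simp add: algebra_simps)
      hence "e k = inverse (a - b) * (y - x)" using False by (simp add: field_simps)
      moreover have "inverse (a - b) * (y - x) \<in> span e k"
        using ab by (intro span_smult span_diff K_inverse K_minus)
      ultimately show ?thesis using assms by simp
    qed
  qed
  moreover have "(\<lambda>(a, x). a * e k + x) ` (K \<times> span e k) \<subseteq> span e (Suc k)"
    using span_Suc by auto
  ultimately have "card (K \<times> span e k) \<le> card (span e (Suc k))"
    by (intro card_inj_on_le) auto
  thus ?thesis by (simp add: card_cartesian_product)
qed

lemma min_aux: "(2::nat) \<le> q \<Longrightarrow> min (q * a) Q \<le> q * min a Q"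
proof -
  assume q: "2 \<le> q"
  have "a \<le> q * a" using q by simp
  moreover have "Q \<le> q * Q" using q by simp
  ultimately show ?thesis
    by (cases "a \<le> Q"; cases "q * a \<le> Q"; simp only: min_def if_True if_False; linarith)
qed

lemma span_exists: "\<exists>e. card (span e k) \<ge> min (q ^ k) (card (UNIV :: 'a set))"
proof (induction k)
  case 0
  have "span e 0 = {0}" for e unfolding span_def by auto
  thus ?case by simp
next
  case (Suc k)
  then obtain e where e: "card (span e k) \<ge> min (q ^ k) (card (UNIV :: 'a set))" by blast
  show ?case
  proof (cases "span e k = UNIV")
    case True
    hence "span e (Suc k) = UNIV" using span_mono[of e k] by auto
    thus ?thesis by (intro exI[of _ e]) (simp add: min.coboundedI2)
  next
    case False
    then obtain x where x: "x \<notin> span e k" by auto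
    define e' where "e' = e(k := x)"
    have se: "span e' k = span e k" unfolding e'_def by (intro span_cong) auto
    have "e' k \<notin> span e' k" using x se by (simp add: e'_def)
    hence "card K * card (span e' k) \<le> card (span e' (Suc k))" by (rule span_card_Suc)
    moreover have "q * min (q ^ k) (card (UNIV :: 'a set)) \<le> card K * card (span e' k)"
      using card_K_ge e se by (intro mult_le_mono) auto
    moreover have "min (q ^ Suc k) (card (UNIV :: 'a set)) \<le> q * min (q ^ k) (card (UNIV :: 'a set))"
      using min_aux[OF q_ge2] by simp
    ultimately show ?thesis by (intro exI[of _ e']) linarith
  qed
qed

lemma span_UNIV: "\<exists>e. span e h = UNIV"
proof -
  obtain e where "card (span e h) \<ge> min (q ^ h) (card (UNIV :: 'a set))" using span_exists by blast
  hence "card (span e h) \<ge> card (UNIV :: 'a set)" using cardU by simp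
  hence "span e h = UNIV" by (metis card_seteq finite subset_UNIV)
  thus ?thesis by blast
qed

definition Lmaps :: "('a \<Rightarrow> 'a) set" where
  "Lmaps = {\<phi>. (\<forall>x y. \<phi> (x + y) = \<phi> x + \<phi> y) \<and> (\<forall>c\<in>K. \<forall>x. \<phi> (c * x) = c * \<phi> x)}"

lemma Lmaps_sum:
  assumes "\<phi> \<in> Lmaps" shows "\<phi> (\<Sum>i<(k::nat). c i * e i) = (\<Sum>i<k. \<phi> (c i * e i))"
proof (induct k)
  case 0
  have "\<phi> 0 = \<phi> (0 + 0)" by simp
  also have "\<dots> = \<phi> 0 + \<phi> 0" using assms unfolding Lmaps_def by blast
  finally have "\<phi> 0 = 0" by (simp only: add_cancel_right_right)
  thus ?case by simp
next
  case (Suc k) thus ?case using assms by (simp add: Lmaps_def)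
qed

lemma card_Lmaps: "card Lmaps \<le> card (UNIV :: 'a set) ^ h"
proof -
  obtain e where e: "span e h = UNIV" using span_UNIV by blast
  have "inj_on (\<lambda>\<phi>. restrict (\<lambda>i. \<phi> (e i)) {..<h}) Lmaps"
  proof (rule inj_onI)
    fix \<phi> \<psi> assume \<phi>: "\<phi> \<in> Lmaps" and \<psi>: "\<psi> \<in> Lmaps"
      and eq: "restrict (\<lambda>i. \<phi> (e i)) {..<h} = restrict (\<lambda>i. \<psi> (e i)) {..<h}"
    have ei: "\<phi> (e i) = \<psi> (e i)" if "i < h" for i
      using fun_cong[OF eq, of i] that by simp
    show "\<phi> = \<psi>"
    proof
      fix x
      have "x \<in> span e h" using e by simp
      then obtain c where c: "x = (\<Sum>i<h. c i * e i)" "\<forall>i<h. c i \<in> K" unfolding span_def by blast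
      have "\<phi> x = (\<Sum>i<h. \<phi> (c i * e i))" using Lmaps_sum[OF \<phi>, where c=c and k=h and e=e] c(1) by simp
      also have "\<dots> = (\<Sum>i<h. \<psi> (c i * e i))"
        using \<phi> \<psi> c ei by (intro sum.cong) (auto simp: Lmaps_def)
      also have "\<dots> = \<psi> x" using Lmaps_sum[OF \<psi>, where c=c and k=h and e=e] c(1) by simp
      finally show "\<phi> x = \<psi> x" .
    qed
  qed
  moreover have "(\<lambda>\<phi>. restrict (\<lambda>i. \<phi> (e i)) {..<h}) ` Lmaps \<subseteq> PiE {..<h} (\<lambda>_. UNIV)"
    by (intro image_subsetI) (simp add: restrict_PiE_iff)
  ultimately have "card Lmaps \<le> card (PiE {..<h} (\<lambda>_. (UNIV :: 'a set)))"
    by (intro card_inj_on_le) (auto intro!: finite_PiE)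
  thus ?thesis by (simp add: card_PiE)
qed

lemma lin_eval_Lmaps: "lin_eval q h F \<in> Lmaps"
  unfolding Lmaps_def lin_eval_def
  by (auto simp: frob_add distrib_left sum.distrib power_mult_distrib K_pow mult_ac sum_distrib_left)

lemma lin_eval_inj: "inj_on (lin_eval q h) (PiE {..<h} (\<lambda>_. UNIV :: 'a set))"
proof (rule inj_onI)
  fix F G assume F: "F \<in> PiE {..<h} (\<lambda>_. UNIV :: 'a set)" and G: "G \<in> PiE {..<h} (\<lambda>_. UNIV :: 'a set)"
    and eq: "lin_eval q h F = lin_eval q h G"
  define pol :: "(nat \<Rightarrow> 'a) \<Rightarrow> 'a poly" where "pol = (\<lambda>F. \<Sum>l<h. monom (F l) (q ^ l))"
  have polyeq: "poly (pol F) x = lin_eval q h F x" for F x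
    by (simp add: pol_def lin_eval_def poly_sum poly_monom)
  have qinj: "q ^ l = q ^ s \<longleftrightarrow> l = s" for l s using q_ge2 by (intro power_inject_exp) simp
  have coeffp: "coeff (pol F) d = (\<Sum>l<h. if q ^ l = d then F l else 0)" for F d
    by (simp add: pol_def coeff_sum coeff_monom)
  have deg: "degree (pol F) \<le> q ^ (h - 1)" for F
  proof (rule degree_le, intro allI impI)
    fix d assume d: "q ^ (h - 1) < d"
    have "q ^ l \<noteq> d" if "l < h" for l
    proof -
      have "q ^ l \<le> q ^ (h - 1)" using that q_ge2 by (intro power_increasing) auto
      thus ?thesis using d by simp
    qed
    thus "coeff (pol F) d = 0" unfolding coeffp by simp
  qed
  have lt: "q ^ (h - 1) < card (UNIV :: 'a set)" unfolding cardU using q_ge2 h1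
    by (intro power_strict_increasing) auto
  have "pol F = pol G"
    by (rule poly_eqI_degree[of UNIV]) (use polyeq eq deg lt in \<open>auto intro: le_less_trans\<close>)
  show "F = G"
  proof (rule PiE_ext[OF F G])
    fix s assume s: "s \<in> {..<h}"
    have "coeff (pol F) (q ^ s) = F s"
      unfolding coeffp qinj using s by (simp add: sum.delta)
    moreover have "coeff (pol G) (q ^ s) = G s"
      unfolding coeffp qinj using s by (simp add: sum.delta)
    ultimately show "F s = G s" using \<open>pol F = pol G\<close> by simp
  qed
qed

lemma lin_rep: "\<phi> \<in> Lmaps \<Longrightarrow> \<exists>F. lin_eval q h F = \<phi>"
proof -
  assume \<phi>: "\<phi> \<in> Lmaps"
  let ?V = "PiE {..<h} (\<lambda>_. UNIV :: 'a set)"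
  have "card (lin_eval q h ` ?V) = card ?V" using lin_eval_inj by (rule card_image)
  also have "\<dots> = card (UNIV :: 'a set) ^ h" by (simp add: card_PiE)
  finally have "card Lmaps \<le> card (lin_eval q h ` ?V)" using card_Lmaps by simp
  moreover have "lin_eval q h ` ?V \<subseteq> Lmaps" using lin_eval_Lmaps by auto
  ultimately have "lin_eval q h ` ?V = Lmaps" by (intro card_seteq) auto
  hence "\<phi> \<in> lin_eval q h ` ?V" using \<phi> by simp
  then obtain F where "\<phi> = lin_eval q h F" by blast
  thus ?thesis by blast
qed

end

lemma Fq_lin_bij_0: "Fq_lin_bij q \<phi> \<Longrightarrow> \<phi> 0 = 0"
proof -
  assume a: "Fq_lin_bij q \<phi>"
  have "\<phi> 0 = \<phi> (0 + 0)" by simp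
  also have "\<dots> = \<phi> 0 + \<phi> 0" using a unfolding Fq_lin_bij_def by blast
  finally show ?thesis by (simp only: add_cancel_right_right)
qed

lemma Fq_lin_bij_add: "Fq_lin_bij q \<phi> \<Longrightarrow> \<phi> (x + y) = \<phi> x + \<phi> y"
  unfolding Fq_lin_bij_def by blast

lemma Fq_lin_bij_uminus: "Fq_lin_bij q \<phi> \<Longrightarrow> \<phi> (- x) = - \<phi> x"
proof -
  assume a: "Fq_lin_bij q \<phi>"
  have "\<phi> x + \<phi> (- x) = \<phi> (x + - x)" by (rule Fq_lin_bij_add[OF a, symmetric])
  also have "\<dots> = 0" using Fq_lin_bij_0[OF a] by simp
  finally show ?thesis by (simp add: eq_neg_iff_add_eq_0 add.commute)
qed

lemma Fq_lin_bij_diff: "Fq_lin_bij q \<phi> \<Longrightarrow> \<phi> (x - y) = \<phi> x - \<phi> y"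
  using Fq_lin_bij_add[of q \<phi> x "- y"] Fq_lin_bij_uminus[of q \<phi> y] by simp

lemma Fq_lin_bij_bij: "Fq_lin_bij q \<phi> \<Longrightarrow> bij \<phi>"
  unfolding Fq_lin_bij_def by blast

lemma Fq_lin_bij_eq0: "Fq_lin_bij q \<phi> \<Longrightarrow> \<phi> x = 0 \<longleftrightarrow> x = 0"
  using Fq_lin_bij_0[of q \<phi>] Fq_lin_bij_bij[of q \<phi>] by (metis bij_pointE)

lemma Fq_lin_bij_inv:
  fixes \<phi> :: "'a::{finite,field} \<Rightarrow> 'a"
  shows "Fq_lin_bij q \<phi> \<Longrightarrow> Fq_lin_bij q (inv \<phi>)"
proof -
  assume a: "Fq_lin_bij q \<phi>"
  have b: "bij \<phi>" using a unfolding Fq_lin_bij_def by blast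
  have fi: "\<phi> (inv \<phi> x) = x" for x using b by (simp add: bij_is_surj surj_f_inv_f)
  have if': "inv \<phi> (\<phi> x) = x" for x using b by (simp add: bij_is_inj inv_f_f)
  show ?thesis unfolding Fq_lin_bij_def
  proof (intro conjI allI ballI)
    show "bij (inv \<phi>)" using b by (rule bij_imp_bij_inv)
    fix x y :: 'a
    have "inv \<phi> (x + y) = inv \<phi> (\<phi> (inv \<phi> x) + \<phi> (inv \<phi> y))" by (simp add: fi)
    also have "\<dots> = inv \<phi> (\<phi> (inv \<phi> x + inv \<phi> y))" using Fq_lin_bij_add[OF a] by simp
    finally show "inv \<phi> (x + y) = inv \<phi> x + inv \<phi> y" by (simp add: if')
  next
    fix c x :: 'a assume c: "c \<in> Fq q"
    have "inv \<phi> (c * x) = inv \<phi> (c * \<phi> (inv \<phi> x))" by (simp add: fi)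
    also have "\<dots> = inv \<phi> (\<phi> (c * inv \<phi> x))" using a c unfolding Fq_lin_bij_def by simp
    finally show "inv \<phi> (c * x) = c * inv \<phi> x" by (simp add: if')
  qed
qed

lemma Fq_lin_bij_comp: "Fq_lin_bij q \<phi> \<Longrightarrow> Fq_lin_bij q \<psi> \<Longrightarrow> Fq_lin_bij q (\<phi> \<circ> \<psi>)"
  unfolding Fq_lin_bij_def by (auto intro: bij_comp)

lemma Fq_lin_bij_inv_f: "Fq_lin_bij q \<phi> \<Longrightarrow> inv \<phi> (\<phi> x) = x"
  using Fq_lin_bij_bij by (metis bij_is_inj inv_f_f)

lemma Fq_lin_bij_f_inv: "Fq_lin_bij q \<phi> \<Longrightarrow> \<phi> (inv \<phi> x) = x"
  using Fq_lin_bij_bij by (metis bij_is_surj surj_f_inv_f)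

locale codeset = ffset q h ty for q h :: nat and ty :: "'a::{finite,field} itself" +
  fixes n :: nat and C :: "'a list set"
  assumes lin: "Fq_linear_code q n C" and cardC: "card C = q ^ (3 * h)"
    and md: "min_dist C = n - 2" and n3: "n \<ge> 3"
begin

abbreviation z0 where "z0 \<equiv> replicate n (0::'a)"

lemma lenC: "x \<in> C \<Longrightarrow> length x = n"
  using lin unfolding Fq_linear_code_def by blast

lemma zeroC: "z0 \<in> C"
  using lin unfolding Fq_linear_code_def by blast

lemma addC: "x \<in> C \<Longrightarrow> y \<in> C \<Longrightarrow> map2 (+) x y \<in> C"
  using lin unfolding Fq_linear_code_def by blast

lemma smulC: "c \<in> K \<Longrightarrow> x \<in> C \<Longrightarrow> map (\<lambda>t. c * t) x \<in> C"
  using lin unfolding Fq_linear_code_def by blast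

lemma nth_add: "x \<in> C \<Longrightarrow> y \<in> C \<Longrightarrow> l < n \<Longrightarrow> map2 (+) x y ! l = x ! l + y ! l"
  using lenC by simp

definition sub where "sub x y = map2 (+) x (map (\<lambda>t. (-1) * t) y)"

lemma subC: "x \<in> C \<Longrightarrow> y \<in> C \<Longrightarrow> sub x y \<in> C"
  unfolding sub_def using K_1 K_uminus by (intro addC smulC) auto

lemma nth_sub: "x \<in> C \<Longrightarrow> y \<in> C \<Longrightarrow> l < n \<Longrightarrow> sub x y ! l = x ! l - y ! l"
  unfolding sub_def using lenC by simp

lemma finC: "finite C"
proof -
  have "C \<subseteq> {x. set x \<subseteq> UNIV \<and> length x = n}" using lenC by auto
  thus ?thesis using finite_lists_length_eq[of "UNIV :: 'a set" n] by (auto intro: finite_subset)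
qed

lemma dist_ge: "x \<in> C \<Longrightarrow> y \<in> C \<Longrightarrow> x \<noteq> y \<Longrightarrow> n - 2 \<le> hamming x y"
proof -
  assume xy: "x \<in> C" "y \<in> C" "x \<noteq> y"
  have fin: "finite {hamming x y | x y. x \<in> C \<and> y \<in> C \<and> x \<noteq> y}"
  proof -
    have sub: "{hamming x y | x y. x \<in> C \<and> y \<in> C \<and> x \<noteq> y} \<subseteq> (\<lambda>(x, y). hamming x y) ` (C \<times> C)"
      by auto
    show ?thesis by (rule finite_subset[OF sub]) (intro finite_imageI finite_cartesian_product finC)
  qed
  have "min_dist C \<le> hamming x y" unfolding min_dist_def
    using xy by (intro Min_le fin) auto
  thus ?thesis using md by simp
qed

lemma zeros_le2:
  assumes x: "x \<in> C" "x \<noteq> z0" shows "card {l. l < n \<and> x ! l = 0} \<le> 2"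
proof -
  have "hamming x z0 = card {l. l < n \<and> x ! l \<noteq> 0}"
    unfolding hamming_def using lenC[OF x(1)] by (intro arg_cong[of _ _ card]) auto
  hence ge: "n - 2 \<le> card {l. l < n \<and> x ! l \<noteq> 0}" using dist_ge[OF x(1) zeroC x(2)] by simp
  have U: "{l. l < n \<and> x ! l = 0} \<union> {l. l < n \<and> x ! l \<noteq> 0} = {..<n}" by auto
  have "card {l. l < n \<and> x ! l = 0} + card {l. l < n \<and> x ! l \<noteq> 0} = card {..<n}"
    by (subst card_Un_disjoint[symmetric]) (auto simp only: U)
  thus ?thesis using ge by simp
qed

lemma three_zeros:
  assumes x: "x \<in> C" and abc: "a < n" "b < n" "c < n" "a \<noteq> b" "a \<noteq> c" "b \<noteq> c"
    and z: "x ! a = 0" "x ! b = 0" "x ! c = 0"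
  shows "x = z0"
proof (rule ccontr)
  assume "x \<noteq> z0"
  hence le: "card {l. l < n \<and> x ! l = 0} \<le> 2" using zeros_le2 x by blast
  have "{a, b, c} \<subseteq> {l. l < n \<and> x ! l = 0}" using abc z by auto
  hence "card {a, b, c} \<le> card {l. l < n \<and> x ! l = 0}" by (intro card_mono) auto
  moreover have "card {a, b, c} = 3" using abc by simp
  ultimately show False using le by simp
qed

lemma eq3:
  assumes xy: "x \<in> C" "y \<in> C" and abc: "a < n" "b < n" "c < n" "a \<noteq> b" "a \<noteq> c" "b \<noteq> c"
    and e: "x ! a = y ! a" "x ! b = y ! b" "x ! c = y ! c"
  shows "x = y"
proof -
  have "sub x y = z0"
    using three_zeros[OF subC[OF xy] abc] e nth_sub[OF xy] abc by simp
  hence "x ! l = y ! l" if "l < n" for l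
    using nth_sub[OF xy that] that by (metis eq_iff_diff_eq_0 nth_replicate)
  thus ?thesis using lenC xy by (intro nth_equalityI) auto
qed

lemma exist3:
  assumes abc: "a < n" "b < n" "c < n" "a \<noteq> b" "a \<noteq> c" "b \<noteq> c"
  shows "\<exists>x\<in>C. x ! a = \<alpha> \<and> x ! b = \<beta> \<and> x ! c = \<gamma>"
proof -
  let ?f = "\<lambda>x. (x ! a, x ! b, x ! c)"
  have inj: "inj_on ?f C" by (rule inj_onI) (use eq3 abc in auto)
  have "card (?f ` C) = card C" using inj by (rule card_image)
  also have "\<dots> = card (UNIV :: 'a set) ^ 3"
    using cardC cardU by (simp add: power_mult[symmetric] mult.commute)
  also have "\<dots> = card (UNIV :: ('a \<times> 'a \<times> 'a) set)"
    by (simp add: card_cartesian_product UNIV_Times_UNIV[symmetric] power3_eq_cube del: UNIV_Times_UNIV)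
  finally have "?f ` C = UNIV" by (intro card_subset_eq) auto
  hence "(\<alpha>, \<beta>, \<gamma>) \<in> ?f ` C" by simp
  thus ?thesis by force
qed

end

context codeset
begin

definition LinP :: "nat \<Rightarrow> (nat \<Rightarrow> 'a \<Rightarrow> 'a) \<Rightarrow> bool" where
  "LinP k \<Phi> \<longleftrightarrow> (\<forall>l<n. l \<noteq> k \<longrightarrow> Fq_lin_bij q (\<Phi> l)) \<and>
     (\<forall>x\<in>C. x ! k = 0 \<longrightarrow> (\<forall>s. \<exists>y\<in>C. y ! k = 0 \<and> (\<forall>l<n. l \<noteq> k \<longrightarrow> \<Phi> l (y ! l) = s * \<Phi> l (x ! l))))"

lemma nth_pr:
  assumes "length x = n" "k < n" "l < n" "l \<noteq> k"
  shows "(take k x @ drop (Suc k) x) ! (if l < k then l else l - 1) = x ! l"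
  using assms by (auto simp: nth_append min_def)

lemma proj_Lin:
  assumes k: "k < n" and D: "linear_code (n - 1) D" and E: "Fq_equiv q (n - 1) (projection k C) D"
  shows "\<exists>\<Phi>. LinP k \<Phi>"
proof -
  obtain \<sigma> \<phi> where \<sigma>: "\<sigma> permutes {..<n-1}" and \<phi>: "\<forall>i<n-1. Fq_lin_bij q (\<phi> i)"
    and DE: "D = (\<lambda>x. map (\<lambda>i. \<phi> i (x ! \<sigma> i)) [0..<n-1]) ` projection k C"
    using E unfolding Fq_equiv_def by blast
  define idx where "idx l = (if l < k then l else l - 1)" for l :: nat
  define \<Phi> where "\<Phi> l = \<phi> (inv \<sigma> (idx l))" for l
  have idx_lt: "idx l < n - 1" if "l < n" "l \<noteq> k" for l
    using that k unfolding idx_def by auto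
  have inv\<sigma>: "inv \<sigma> p < n - 1" if "p < n - 1" for p
    using permutes_in_image[OF permutes_inv[OF \<sigma>]] that by simp
  have \<sigma>inv: "\<sigma> (inv \<sigma> p) = p" for p
    using permutes_inverses(1)[OF \<sigma>] by simp
  let ?pr = "\<lambda>x::'a list. take k x @ drop (Suc k) x"
  let ?m = "\<lambda>z::'a list. map (\<lambda>i. \<phi> i (z ! \<sigma> i)) [0..<n-1]"
  have "LinP k \<Phi>" unfolding LinP_def
  proof (intro conjI allI impI ballI)
    fix l assume "l < n" "l \<noteq> k"
    thus "Fq_lin_bij q (\<Phi> l)" unfolding \<Phi>_def using \<phi> inv\<sigma> idx_lt by simp
  next
    fix x s assume x: "x \<in> C" and xk: "x ! k = 0"
    have "?pr x \<in> projection k C" unfolding projection_def using x xk by blast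
    hence "?m (?pr x) \<in> D" unfolding DE by blast
    hence "map (\<lambda>t. s * t) (?m (?pr x)) \<in> D" using D unfolding linear_code_def by blast
    then obtain z where z: "z \<in> projection k C" and zeq: "map (\<lambda>t. s * t) (?m (?pr x)) = ?m z"
      unfolding DE by blast
    then obtain y where y: "y \<in> C" "y ! k = 0" and zy: "z = ?pr y" unfolding projection_def by blast
    show "\<exists>y\<in>C. y ! k = 0 \<and> (\<forall>l<n. l \<noteq> k \<longrightarrow> \<Phi> l (y ! l) = s * \<Phi> l (x ! l))"
    proof (intro bexI[OF _ y(1)] conjI allI impI)
      show "y ! k = 0" by fact
      fix l assume l: "l < n" "l \<noteq> k"
      define p where "p = inv \<sigma> (idx l)"
      have p: "p < n - 1" unfolding p_def using inv\<sigma> idx_lt l by simp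
      have "map (\<lambda>t. s * t) (?m (?pr x)) ! p = ?m z ! p" by (simp only: zeq)
      hence "s * \<phi> p (?pr x ! \<sigma> p) = \<phi> p (z ! \<sigma> p)" using p by (simp only: nth_map length_map length_upt nth_upt diff_zero add_0)
      moreover have "\<sigma> p = idx l" unfolding p_def by (rule \<sigma>inv)
      moreover have "?pr x ! idx l = x ! l" unfolding idx_def by (rule nth_pr) (use lenC x l k in auto)
      moreover have "?pr y ! idx l = y ! l" unfolding idx_def by (rule nth_pr) (use lenC y l k in auto)
      ultimately have "s * \<phi> p (x ! l) = \<phi> p (y ! l)" using zy by simp
      thus "\<Phi> l (y ! l) = s * \<Phi> l (x ! l)" unfolding \<Phi>_def p_def[symmetric] by simp
    qed
  qed
  thus ?thesis by blast
qed

lemma LinP_coeffs: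
  assumes ijk: "i < n" "j < n" "k < n" "i \<noteq> j" "i \<noteq> k" "j \<noteq> k" and L: "LinP k \<Phi>"
  shows "\<exists>u v. (\<forall>l<n. l \<noteq> k \<longrightarrow> (\<forall>x\<in>C. x ! k = 0 \<longrightarrow> \<Phi> l (x ! l) = u l * \<Phi> i (x ! i) + v l * \<Phi> j (x ! j)))
     \<and> (\<forall>l<n. l \<noteq> j \<and> l \<noteq> k \<longrightarrow> u l \<noteq> 0) \<and> (\<forall>l<n. l \<noteq> i \<and> l \<noteq> k \<longrightarrow> v l \<noteq> 0)
     \<and> (\<forall>l l'. l < n \<longrightarrow> l' < n \<longrightarrow> l \<notin> {i, j, k} \<longrightarrow> l' \<notin> {i, j, k} \<longrightarrow> l \<noteq> l' \<longrightarrow> u l * v l' \<noteq> u l' * v l)"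
proof -
  have \<Phi>: "Fq_lin_bij q (\<Phi> l)" if "l < n" "l \<noteq> k" for l using L that unfolding LinP_def by blast
  have \<Phi>i: "Fq_lin_bij q (\<Phi> i)" and \<Phi>j: "Fq_lin_bij q (\<Phi> j)" using \<Phi> ijk by auto
  define Y where "Y A B = (SOME x. x \<in> C \<and> x ! i = inv (\<Phi> i) A \<and> x ! j = inv (\<Phi> j) B \<and> x ! k = 0)" for A B
  have Y: "Y A B \<in> C \<and> Y A B ! i = inv (\<Phi> i) A \<and> Y A B ! j = inv (\<Phi> j) B \<and> Y A B ! k = 0" for A B
    unfolding Y_def by (rule someI_ex) (use exist3[OF ijk] in blast)
  have Yu: "x = Y A B" if "x \<in> C" "x ! i = inv (\<Phi> i) A" "x ! j = inv (\<Phi> j) B" "x ! k = 0" for x A B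
    by (rule eq3[OF that(1) conjunct1[OF Y[of A B]] ijk]) (use Y[of A B] that in simp_all)
  have Yx: "x = Y (\<Phi> i (x ! i)) (\<Phi> j (x ! j))" if "x \<in> C" "x ! k = 0" for x
    using that by (intro Yu) (auto simp: Fq_lin_bij_inv_f[OF \<Phi>i] Fq_lin_bij_inv_f[OF \<Phi>j])
  define G where "G l A B = \<Phi> l (Y A B ! l)" for l A B
  have Gadd: "G l (A + A') (B + B') = G l A B + G l A' B'" if l: "l < n" "l \<noteq> k" for l A A' B B'
  proof -
    have "map2 (+) (Y A B) (Y A' B') = Y (A + A') (B + B')"
      using Y[of A B] Y[of A' B'] ijk
      by (intro Yu) (auto simp: nth_add addC Fq_lin_bij_add[OF Fq_lin_bij_inv[OF \<Phi>i]]
            Fq_lin_bij_add[OF Fq_lin_bij_inv[OF \<Phi>j]])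
    hence "Y (A + A') (B + B') ! l = Y A B ! l + Y A' B' ! l"
      using nth_add[of "Y A B" "Y A' B'" l] Y l by simp
    thus ?thesis unfolding G_def using Fq_lin_bij_add[OF \<Phi>[OF l]] by simp
  qed
  have Gsm: "G l (s * A) (s * B) = s * G l A B" if l: "l < n" "l \<noteq> k" for l s A B
  proof -
    obtain y where y: "y \<in> C" "y ! k = 0" and ys: "\<forall>m<n. m \<noteq> k \<longrightarrow> \<Phi> m (y ! m) = s * \<Phi> m (Y A B ! m)"
      using L Y[of A B] unfolding LinP_def by blast
    have "\<Phi> i (y ! i) = s * A" using ys ijk Y[of A B] Fq_lin_bij_f_inv[OF \<Phi>i] by simp
    moreover have "\<Phi> j (y ! j) = s * B" using ys ijk Y[of A B] Fq_lin_bij_f_inv[OF \<Phi>j] by simp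
    ultimately have "y = Y (s * A) (s * B)" using Yx[OF y] by simp
    thus ?thesis unfolding G_def using ys l by simp
  qed
  define u where "u l = G l 1 0" for l
  define v where "v l = G l 0 1" for l
  have Gform: "G l A B = u l * A + v l * B" if l: "l < n" "l \<noteq> k" for l A B
  proof -
    have "G l A B = G l (A + 0) (0 + B)" by simp
    also have "\<dots> = G l A 0 + G l 0 B" by (rule Gadd[OF l])
    also have "G l A 0 = G l (A * 1) (A * 0)" by simp
    also have "\<dots> = A * u l" unfolding u_def by (rule Gsm[OF l])
    also have "G l 0 B = G l (B * 0) (B * 1)" by simp
    also have "\<dots> = B * v l" unfolding v_def by (rule Gsm[OF l])
    finally show ?thesis by (simp add: mult.commute)
  qed
  have form: "\<Phi> l (x ! l) = u l * \<Phi> i (x ! i) + v l * \<Phi> j (x ! j)"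
    if l: "l < n" "l \<noteq> k" and x: "x \<in> C" "x ! k = 0" for l x
  proof -
    have "\<Phi> l (x ! l) = G l (\<Phi> i (x ! i)) (\<Phi> j (x ! j))" unfolding G_def using Yx[OF x] by simp
    thus ?thesis using Gform[OF l] by simp
  qed
  have unz: "u l \<noteq> 0" if l: "l < n" "l \<noteq> j" "l \<noteq> k" for l
  proof
    assume u0: "u l = 0"
    obtain x where x: "x \<in> C" "x ! i = 1" "x ! j = 0" "x ! k = 0" using exist3[OF ijk] by blast
    have "\<Phi> l (x ! l) = 0" using form[OF _ _ x(1,4)] l u0 x Fq_lin_bij_0[OF \<Phi>j] by simp
    hence "x ! l = 0" using Fq_lin_bij_eq0[OF \<Phi>] l by blast
    hence "x = z0" using three_zeros[OF x(1), of j k l] ijk l x by auto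
    thus False using x ijk by simp
  qed
  have vnz: "v l \<noteq> 0" if l: "l < n" "l \<noteq> i" "l \<noteq> k" for l
  proof
    assume v0: "v l = 0"
    obtain x where x: "x \<in> C" "x ! i = 0" "x ! j = 1" "x ! k = 0" using exist3[OF ijk] by blast
    have "\<Phi> l (x ! l) = 0" using form[OF _ _ x(1,4)] l v0 x Fq_lin_bij_0[OF \<Phi>i] by simp
    hence "x ! l = 0" using Fq_lin_bij_eq0[OF \<Phi>] l by blast
    hence "x = z0" using three_zeros[OF x(1), of i k l] ijk l x by auto
    thus False using x ijk by simp
  qed
  have dist: "u l * v l' \<noteq> u l' * v l"
    if l: "l < n" "l' < n" "l \<notin> {i, j, k}" "l' \<notin> {i, j, k}" "l \<noteq> l'" for l l'
  proof
    assume eq: "u l * v l' = u l' * v l"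
    obtain x where x: "x \<in> C" "x ! i = inv (\<Phi> i) (v l)" "x ! j = inv (\<Phi> j) (- u l)" "x ! k = 0"
      using exist3[OF ijk] by blast
    have xi: "\<Phi> i (x ! i) = v l" using x Fq_lin_bij_f_inv[OF \<Phi>i] by simp
    have xj: "\<Phi> j (x ! j) = - u l" using x Fq_lin_bij_f_inv[OF \<Phi>j] by simp
    have "\<Phi> l (x ! l) = 0" using form[OF _ _ x(1,4), of l] l xi xj by (simp add: mult.commute)
    hence z1: "x ! l = 0" using Fq_lin_bij_eq0[OF \<Phi>] l by blast
    have "\<Phi> l' (x ! l') = u l' * v l - v l' * u l" using form[OF _ _ x(1,4), of l'] l xi xj by simp
    also have "\<dots> = 0" using eq by (simp add: mult.commute)
    finally have z2: "x ! l' = 0" using Fq_lin_bij_eq0[OF \<Phi>] l by blast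
    have "x = z0" using three_zeros[OF x(1), of k l l'] ijk l x z1 z2 by auto
    hence "v l = 0" using xi x ijk Fq_lin_bij_0[OF \<Phi>i] by simp
    thus False using vnz l by auto
  qed
  show ?thesis
    by (rule exI[of _ u], rule exI[of _ v], intro conjI allI impI ballI) (use form unz vnz dist in simp_all)
qed

end

lemma chain_aux:
  fixes a b c d A B D W V :: "'a::field"
  assumes "A = a * W" "B = b * W" "B = c * V" "D = d * V" "a \<noteq> 0" "c \<noteq> 0"
  shows "D = d * b / (c * a) * A"
proof -
  have V: "V = b * W / c" using assms(2,3,6) by (simp add: eq_divide_eq mult.commute)
  have W: "W = A / a" using assms(1,5) by (simp add: eq_divide_eq mult.commute)
  show ?thesis by (simp add: assms(4) V W divide_inverse mult_ac)
qed

lemma ratio_inj: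
  fixes a b c d e f :: "'a::field"
  assumes "a \<noteq> 0" "b \<noteq> 0" "c \<noteq> 0" "e \<noteq> 0" "a * d / (c * b) = a * f / (e * b)"
  shows "c * f = e * d"
proof -
  have "a * d * (e * b) = a * f * (c * b)"
    using assms(5) frac_eq_eq[of "c * b" "e * b" "a * d" "a * f"] assms(2-4) by simp
  hence "(e * d) * (a * b) = (c * f) * (a * b)" by (simp add: mult_ac)
  thus ?thesis using assms(1,2) by simp
qed


context codeset
begin

definition Coef :: "nat \<Rightarrow> nat \<Rightarrow> nat \<Rightarrow> (nat \<Rightarrow> 'a \<Rightarrow> 'a) \<Rightarrow> (nat \<Rightarrow> 'a) \<Rightarrow> (nat \<Rightarrow> 'a) \<Rightarrow> bool" where
  "Coef k i j \<Phi> u v \<longleftrightarrow> (\<forall>l<n. l \<noteq> k \<longrightarrow> (\<forall>x\<in>C. x ! k = 0 \<longrightarrow> \<Phi> l (x ! l) = u l * \<Phi> i (x ! i) + v l * \<Phi> j (x ! j)))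
     \<and> (\<forall>l<n. l \<noteq> j \<and> l \<noteq> k \<longrightarrow> u l \<noteq> 0) \<and> (\<forall>l<n. l \<noteq> i \<and> l \<noteq> k \<longrightarrow> v l \<noteq> 0)
     \<and> (\<forall>l l'. l < n \<longrightarrow> l' < n \<longrightarrow> l \<notin> {i, j, k} \<longrightarrow> l' \<notin> {i, j, k} \<longrightarrow> l \<noteq> l' \<longrightarrow> u l * v l' \<noteq> u l' * v l)"

lemma Coef_ex:
  assumes "i < n" "j < n" "k < n" "i \<noteq> j" "i \<noteq> k" "j \<noteq> k" "LinP k \<Phi>"
  shows "\<exists>u v. Coef k i j \<Phi> u v"
  unfolding Coef_def by (rule LinP_coeffs[OF assms])

lemma Coef_form:
  "Coef k i j \<Phi> u v \<Longrightarrow> l < n \<Longrightarrow> l \<noteq> k \<Longrightarrow> x \<in> C \<Longrightarrow> x ! k = 0 \<Longrightarrow>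
    \<Phi> l (x ! l) = u l * \<Phi> i (x ! i) + v l * \<Phi> j (x ! j)"
  unfolding Coef_def by blast

lemma Coef_u: "Coef k i j \<Phi> u v \<Longrightarrow> l < n \<Longrightarrow> l \<noteq> j \<Longrightarrow> l \<noteq> k \<Longrightarrow> u l \<noteq> 0"
  unfolding Coef_def by blast

lemma Coef_v: "Coef k i j \<Phi> u v \<Longrightarrow> l < n \<Longrightarrow> l \<noteq> i \<Longrightarrow> l \<noteq> k \<Longrightarrow> v l \<noteq> 0"
  unfolding Coef_def by blast

lemma Coef_dist: "Coef k i j \<Phi> u v \<Longrightarrow> l < n \<Longrightarrow> l' < n \<Longrightarrow> l \<notin> {i, j, k} \<Longrightarrow> l' \<notin> {i, j, k} \<Longrightarrow> l \<noteq> l' \<Longrightarrow>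
   u l * v l' \<noteq> u l' * v l"
  unfolding Coef_def by blast

lemma LinP_bij: "LinP k \<Phi> \<Longrightarrow> l < n \<Longrightarrow> l \<noteq> k \<Longrightarrow> Fq_lin_bij q (\<Phi> l)"
  unfolding LinP_def by blast

lemma Fq_lin_bij_Lmaps: "Fq_lin_bij q \<phi> \<Longrightarrow> \<phi> \<in> Lmaps"
  unfolding Fq_lin_bij_def Lmaps_def by blast

lemma main_A:
  assumes ijk: "i < n" "j < n" "k < n" "i \<noteq> j" "i \<noteq> k" "j \<noteq> k" and m1: "m \<ge> 1" and nm: "n \<ge> 3 + m"
    and H: "\<forall>f g :: nat \<Rightarrow> 'a. lin_invertible q h f \<and> lin_invertible q h g \<and> Prop q h m f g
            \<longrightarrow> lin_monomial h f \<and> lin_monomial h g"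
    and L\<Phi>: "LinP k \<Phi>" and L\<Psi>: "LinP j \<Psi>" and L\<Omega>: "LinP i \<Omega>"
    and C\<Phi>: "Coef k i j \<Phi> u v" and C\<Psi>: "Coef j i k \<Psi> u' v'" and C\<Omega>: "Coef i j k \<Omega> u'' v''"
  shows "\<exists>t s c. t < n \<and> t \<noteq> i \<and> t \<noteq> j \<and> t \<noteq> k \<and> c \<noteq> 0 \<and> (\<forall>y. \<Phi> t (inv (\<Psi> t) y) = c * y ^ (q ^ s))"
proof -
  define S where "S = {..<n} - {i, j, k}"
  have cS: "card S = n - 3" unfolding S_def using ijk by (subst card_Diff_subset) auto
  have "card {1..m} \<le> card S" using cS nm by simp
  then obtain lj where lj: "lj ` {1..m} \<subseteq> S" "inj_on lj {1..m}"
    using card_le_inj[of "{1..m}" S] unfolding S_def by auto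
  define t where "t = lj 1"
  have tS: "t \<in> S" using lj m1 unfolding t_def by auto
  hence t: "t < n" "t \<noteq> i" "t \<noteq> j" "t \<noteq> k" unfolding S_def by auto
  have Sd: "l < n" "l \<noteq> i" "l \<noteq> j" "l \<noteq> k" if "l \<in> S" for l using that unfolding S_def by auto
  define mm where "mm l = u t * v l / (u l * v t)" for l
  define nn where "nn l = u' t * v' l / (u' l * v' t)" for l
  define kk where "kk l = u'' t * v'' l / (u'' l * v'' t)" for l
  have \<Phi>b: "Fq_lin_bij q (\<Phi> l)" if "l < n" "l \<noteq> k" for l using LinP_bij[OF L\<Phi> that] .
  have \<Psi>b: "Fq_lin_bij q (\<Psi> l)" if "l < n" "l \<noteq> j" for l using LinP_bij[OF L\<Psi> that] .
  have \<Omega>b: "Fq_lin_bij q (\<Omega> l)" if "l < n" "l \<noteq> i" for l using LinP_bij[OF L\<Omega> that] .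
  have mm0: "mm l \<noteq> 0" if "l \<in> S" for l
    unfolding mm_def using Sd[OF that] t Coef_u[OF C\<Phi>] Coef_v[OF C\<Phi>] by simp
  have nn0: "nn l \<noteq> 0" if "l \<in> S" for l
    unfolding nn_def using Sd[OF that] t Coef_u[OF C\<Psi>] Coef_v[OF C\<Psi>] by simp
  have kk0: "kk l \<noteq> 0" if "l \<in> S" for l
    unfolding kk_def using Sd[OF that] t Coef_u[OF C\<Omega>] Coef_v[OF C\<Omega>] by simp
  have mmt: "mm t = 1" unfolding mm_def using t Coef_u[OF C\<Phi>] Coef_v[OF C\<Phi>] by simp
  have nnt: "nn t = 1" unfolding nn_def using t Coef_u[OF C\<Psi>] Coef_v[OF C\<Psi>] by simp
  have kkt: "kk t = 1" unfolding kk_def using t Coef_u[OF C\<Omega>] Coef_v[OF C\<Omega>] by simp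
  have mminj: "l = l'" if "l \<in> S" "l' \<in> S" "mm l = mm l'" for l l'
  proof (rule ccontr)
    assume ne: "l \<noteq> l'"
    have "u l * v l' = u l' * v l"
      by (rule ratio_inj[of "u t" "v t"]) (use that Sd t Coef_u[OF C\<Phi>] Coef_v[OF C\<Phi>] in \<open>auto simp: mm_def\<close>)
    thus False using Coef_dist[OF C\<Phi>, of l l'] Sd[OF that(1)] Sd[OF that(2)] ne by auto
  qed
  have nninj: "l = l'" if "l \<in> S" "l' \<in> S" "nn l = nn l'" for l l'
  proof (rule ccontr)
    assume ne: "l \<noteq> l'"
    have "u' l * v' l' = u' l' * v' l"
      by (rule ratio_inj[of "u' t" "v' t"]) (use that Sd t Coef_u[OF C\<Psi>] Coef_v[OF C\<Psi>] in \<open>auto simp: nn_def\<close>)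
    thus False using Coef_dist[OF C\<Psi>, of l l'] Sd[OF that(1)] Sd[OF that(2)] ne by auto
  qed
  have kkinj: "l = l'" if "l \<in> S" "l' \<in> S" "kk l = kk l'" for l l'
  proof (rule ccontr)
    assume ne: "l \<noteq> l'"
    have "u'' l * v'' l' = u'' l' * v'' l"
      by (rule ratio_inj[of "u'' t" "v'' t"]) (use that Sd t Coef_u[OF C\<Omega>] Coef_v[OF C\<Omega>] in \<open>auto simp: kk_def\<close>)
    thus False using Coef_dist[OF C\<Omega>, of l l'] Sd[OF that(1)] Sd[OF that(2)] ne by auto
  qed
  define f where "f = \<Phi> t \<circ> inv (\<Psi> t)"
  define g where "g = \<Phi> t \<circ> inv (\<Omega> t)"
  have fb: "Fq_lin_bij q f" unfolding f_def
    by (rule Fq_lin_bij_comp[OF \<Phi>b[OF t(1) t(4)] Fq_lin_bij_inv[OF \<Psi>b[OF t(1) t(3)]]])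
  have gb: "Fq_lin_bij q g" unfolding g_def
    by (rule Fq_lin_bij_comp[OF \<Phi>b[OF t(1) t(4)] Fq_lin_bij_inv[OF \<Omega>b[OF t(1) t(2)]]])
  obtain F where F: "lin_eval q h F = f" using lin_rep[OF Fq_lin_bij_Lmaps[OF fb]] by blast
  obtain G where G: "lin_eval q h G = g" using lin_rep[OF Fq_lin_bij_Lmaps[OF gb]] by blast
  have b1: "bij (\<Phi> t)" by (rule Fq_lin_bij_bij[OF \<Phi>b[OF t(1) t(4)]])
  have b2: "bij (\<Psi> t)" by (rule Fq_lin_bij_bij[OF \<Psi>b[OF t(1) t(3)]])
  have b3: "bij (\<Omega> t)" by (rule Fq_lin_bij_bij[OF \<Omega>b[OF t(1) t(2)]])
  have invf: "inv f = \<Psi> t \<circ> inv (\<Phi> t)" unfolding f_def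
    by (simp only: o_inv_distrib[OF b1 bij_imp_bij_inv[OF b2]] inv_inv_eq[OF b2])
  have invg: "inv g = \<Omega> t \<circ> inv (\<Phi> t)" unfolding g_def
    by (simp only: o_inv_distrib[OF b1 bij_imp_bij_inv[OF b3]] inv_inv_eq[OF b3])
  have key: "inverse (mm l) * f (nn l * inv f x) = g (kk l * inv g x)" if lS: "l \<in> S" for l x
  proof -
    note l = Sd[OF lS]
    define z where "z = inv (\<Phi> t) x"
    obtain c1 where c1: "c1 \<in> C" "c1 ! i = 0" "c1 ! j = 0" "c1 ! t = z"
      using exist3[of i j t 0 0 z] ijk t by auto
    define e where "e = c1 ! l"
    obtain c2 where c2: "c2 \<in> C" "c2 ! i = 0" "c2 ! k = 0" "c2 ! l = e"
      using exist3[of i k l 0 0 e] ijk l by auto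
    obtain c3 where c3: "c3 \<in> C" "c3 ! j = 0" "c3 ! k = 0" "c3 ! l = e"
      using exist3[of j k l 0 0 e] ijk l by auto
    have \<Omega>j0: "\<Omega> j 0 = 0" using Fq_lin_bij_0[OF \<Omega>b] ijk by simp
    have \<Omega>k0: "\<Omega> k 0 = 0" using Fq_lin_bij_0[OF \<Omega>b] ijk by simp
    have \<Psi>i0: "\<Psi> i 0 = 0" using Fq_lin_bij_0[OF \<Psi>b] ijk by simp
    have \<Psi>k0: "\<Psi> k 0 = 0" using Fq_lin_bij_0[OF \<Psi>b] ijk by simp
    have \<Phi>i0: "\<Phi> i 0 = 0" using Fq_lin_bij_0[OF \<Phi>b] ijk by simp
    have \<Phi>j0: "\<Phi> j 0 = 0" using Fq_lin_bij_0[OF \<Phi>b] ijk by simp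
    have O1: "\<Omega> t z = v'' t * \<Omega> k (c1 ! k)"
      using Coef_form[OF C\<Omega> t(1) t(2) c1(1,2)] c1 \<Omega>j0 by simp
    have O2: "\<Omega> l e = v'' l * \<Omega> k (c1 ! k)"
      using Coef_form[OF C\<Omega> l(1) l(2) c1(1,2)] c1 \<Omega>j0 by (simp add: e_def)
    have O3: "\<Omega> l e = u'' l * \<Omega> j (c2 ! j)"
      using Coef_form[OF C\<Omega> l(1) l(2) c2(1,2)] c2 \<Omega>k0 by simp
    have O4: "\<Omega> t (c2 ! t) = u'' t * \<Omega> j (c2 ! j)"
      using Coef_form[OF C\<Omega> t(1) t(2) c2(1,2)] c2 \<Omega>k0 by simp
    have Ok: "\<Omega> t (c2 ! t) = kk l * \<Omega> t z" unfolding kk_def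
      by (rule chain_aux[OF O1 O2 O3 O4]) (use Coef_u[OF C\<Omega>] Coef_v[OF C\<Omega>] t l in auto)
    have P1: "\<Psi> t z = v' t * \<Psi> k (c1 ! k)"
      using Coef_form[OF C\<Psi> t(1) t(3) c1(1,3)] c1 \<Psi>i0 by simp
    have P2: "\<Psi> l e = v' l * \<Psi> k (c1 ! k)"
      using Coef_form[OF C\<Psi> l(1) l(3) c1(1,3)] c1 \<Psi>i0 by (simp add: e_def)
    have P3: "\<Psi> l e = u' l * \<Psi> i (c3 ! i)"
      using Coef_form[OF C\<Psi> l(1) l(3) c3(1,2)] c3 \<Psi>k0 by simp
    have P4: "\<Psi> t (c3 ! t) = u' t * \<Psi> i (c3 ! i)"
      using Coef_form[OF C\<Psi> t(1) t(3) c3(1,2)] c3 \<Psi>k0 by simp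
    have Pn: "\<Psi> t (c3 ! t) = nn l * \<Psi> t z" unfolding nn_def
      by (rule chain_aux[OF P1 P2 P3 P4]) (use Coef_u[OF C\<Psi>] Coef_v[OF C\<Psi>] t l in auto)
    have F1: "\<Phi> t (c2 ! t) = v t * \<Phi> j (c2 ! j)"
      using Coef_form[OF C\<Phi> t(1) t(4) c2(1,3)] c2 \<Phi>i0 by simp
    have F2: "\<Phi> l e = v l * \<Phi> j (c2 ! j)"
      using Coef_form[OF C\<Phi> l(1) l(4) c2(1,3)] c2 \<Phi>i0 by simp
    have F3: "\<Phi> l e = u l * \<Phi> i (c3 ! i)"
      using Coef_form[OF C\<Phi> l(1) l(4) c3(1,3)] c3 \<Phi>j0 by simp
    have F4: "\<Phi> t (c3 ! t) = u t * \<Phi> i (c3 ! i)"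
      using Coef_form[OF C\<Phi> t(1) t(4) c3(1,3)] c3 \<Phi>j0 by simp
    have Fm: "\<Phi> t (c3 ! t) = mm l * \<Phi> t (c2 ! t)" unfolding mm_def
      by (rule chain_aux[OF F1 F2 F3 F4]) (use Coef_u[OF C\<Phi>] Coef_v[OF C\<Phi>] t l in auto)
    have "inv f x = \<Psi> t z" unfolding invf z_def by simp
    hence "nn l * inv f x = \<Psi> t (c3 ! t)" using Pn by simp
    hence "f (nn l * inv f x) = \<Phi> t (c3 ! t)"
      unfolding f_def using Fq_lin_bij_inv_f[OF \<Psi>b[OF t(1) t(3)]] by simp
    hence lhs: "inverse (mm l) * f (nn l * inv f x) = \<Phi> t (c2 ! t)" using Fm mm0[OF lS] by simp
    have "inv g x = \<Omega> t z" unfolding invg z_def by simp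
    hence "kk l * inv g x = \<Omega> t (c2 ! t)" using Ok by simp
    hence "g (kk l * inv g x) = \<Phi> t (c2 ! t)"
      unfolding g_def using Fq_lin_bij_inv_f[OF \<Omega>b[OF t(1) t(2)]] by simp
    thus ?thesis using lhs by simp
  qed
  have Q1: "\<forall>jj\<in>{1..m}. inverse (mm (lj jj)) \<noteq> 0 \<and> nn (lj jj) \<noteq> 0 \<and> kk (lj jj) \<noteq> 0"
  proof
    fix jj assume jj: "jj \<in> {1..m}"
    hence ljS: "lj jj \<in> S" using lj by auto
    show "inverse (mm (lj jj)) \<noteq> 0 \<and> nn (lj jj) \<noteq> 0 \<and> kk (lj jj) \<noteq> 0"
      using mm0[OF ljS] nn0[OF ljS] kk0[OF ljS] by simp
  qed
  have Q2: "\<forall>jj\<in>{1..m}. \<forall>x. inverse (mm (lj jj)) * lin_eval q h F (nn (lj jj) * inv (lin_eval q h F) x) =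
          lin_eval q h G (kk (lj jj) * inv (lin_eval q h G) x)"
  proof (intro ballI allI)
    fix jj x assume jj: "jj \<in> {1..m}"
    hence ljS: "lj jj \<in> S" using lj by auto
    show "inverse (mm (lj jj)) * lin_eval q h F (nn (lj jj) * inv (lin_eval q h F) x) =
          lin_eval q h G (kk (lj jj) * inv (lin_eval q h G) x)"
      unfolding F G by (rule key[OF ljS])
  qed
  have Q3: "inverse (mm (lj 1)) = 1" "nn (lj 1) = 1" "kk (lj 1) = 1"
    using mmt nnt kkt unfolding t_def by simp_all
  have Q4: "inj_on (\<lambda>jj. inverse (mm (lj jj))) {1..m}"
  proof (rule inj_onI)
    fix a b assume ab: "a \<in> {1..m}" "b \<in> {1..m}" "inverse (mm (lj a)) = inverse (mm (lj b))"
    hence "lj a = lj b" using mminj[of "lj a" "lj b"] lj(1) ab(1,2) by (auto simp: image_subset_iff)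
    thus "a = b" using inj_onD[OF lj(2) _ ab(1,2)] by blast
  qed
  have Q5: "inj_on (\<lambda>jj. nn (lj jj)) {1..m}"
  proof (rule inj_onI)
    fix a b assume ab: "a \<in> {1..m}" "b \<in> {1..m}" "nn (lj a) = nn (lj b)"
    hence "lj a = lj b" using nninj[of "lj a" "lj b"] lj(1) ab(1,2) by (auto simp: image_subset_iff)
    thus "a = b" using inj_onD[OF lj(2) _ ab(1,2)] by blast
  qed
  have Q6: "inj_on (\<lambda>jj. kk (lj jj)) {1..m}"
  proof (rule inj_onI)
    fix a b assume ab: "a \<in> {1..m}" "b \<in> {1..m}" "kk (lj a) = kk (lj b)"
    hence "lj a = lj b" using kkinj[of "lj a" "lj b"] lj(1) ab(1,2) by (auto simp: image_subset_iff)
    thus "a = b" using inj_onD[OF lj(2) _ ab(1,2)] by blast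
  qed
  have "Prop q h m F G" unfolding Prop_def
    apply (rule exI[of _ "\<lambda>jj. inverse (mm (lj jj))"], rule exI[of _ "\<lambda>jj. nn (lj jj)"], rule exI[of _ "\<lambda>jj. kk (lj jj)"])
    using Q1 Q2 Q3 Q4 Q5 Q6 by blast
  moreover have "lin_invertible q h F" unfolding lin_invertible_def F using Fq_lin_bij_bij[OF fb] .
  moreover have "lin_invertible q h G" unfolding lin_invertible_def G using Fq_lin_bij_bij[OF gb] .
  ultimately have "lin_monomial h F" using H by blast
  hence "card {l. l < h \<and> F l \<noteq> 0} = 1" unfolding lin_monomial_def .
  then obtain s where s: "{l. l < h \<and> F l \<noteq> 0} = {s}" by (rule card_1_singletonE)
  have sF: "s < h" "F s \<noteq> 0" using s by auto
  have Fz: "F l = 0" if "l < h" "l \<noteq> s" for l using s that by auto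
  have fform: "f y = F s * y ^ (q ^ s)" for y
  proof -
    have "f y = (\<Sum>l<h. F l * y ^ (q ^ l))" unfolding F[symmetric] lin_eval_def ..
    also have "\<dots> = (\<Sum>l<h. if l = s then F s * y ^ (q ^ s) else 0)"
      by (intro sum.cong) (auto simp: Fz)
    also have "\<dots> = F s * y ^ (q ^ s)" using sF by simp
    finally show ?thesis .
  qed
  show ?thesis
    by (intro exI[of _ t] exI[of _ s] exI[of _ "F s"] conjI allI)
       (use t sF fform in \<open>simp_all add: f_def\<close>)
qed

end

context codeset
begin

lemma main_B:
  assumes ijk: "i < n" "j < n" "k < n" "i \<noteq> j" "i \<noteq> k" "j \<noteq> k"
    and L\<Phi>: "LinP k \<Phi>" and L\<Psi>: "LinP j \<Psi>"
    and C\<Phi>: "Coef k i j \<Phi> u v" and C\<Psi>: "Coef j i k \<Psi> u' v'"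
    and t: "t < n" "t \<noteq> i" "t \<noteq> j" "t \<noteq> k" and c0: "c \<noteq> 0"
    and ff: "\<forall>y. \<Phi> t (inv (\<Psi> t) y) = c * y ^ (q ^ s)"
  shows "\<exists>D. linear_code n D \<and> Fq_equiv q n C D"
proof -
  have \<Phi>b: "Fq_lin_bij q (\<Phi> l)" if "l < n" "l \<noteq> k" for l using LinP_bij[OF L\<Phi> that] .
  have \<Psi>b: "Fq_lin_bij q (\<Psi> l)" if "l < n" "l \<noteq> j" for l using LinP_bij[OF L\<Psi> that] .
  define f where "f y = c * y ^ (q ^ s)" for y :: 'a
  define \<sigma> where "\<sigma> z = z ^ (q ^ s)" for z :: 'a
  have fmul: "f (z * y) = \<sigma> z * f y" for z y unfolding f_def \<sigma>_def by (simp add: power_mult_distrib mult_ac)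
  have \<sigma>0: "\<sigma> z \<noteq> 0" if "z \<noteq> 0" for z unfolding \<sigma>_def using that by simp
  have fPsi: "f (\<Psi> t y) = \<Phi> t y" for y
    using ff Fq_lin_bij_inv_f[OF \<Psi>b[OF t(1) t(3)]] unfolding f_def by metis
  have feq: "f = \<Phi> t \<circ> inv (\<Psi> t)" using ff unfolding f_def by auto
  have fb: "Fq_lin_bij q f" unfolding feq
    by (rule Fq_lin_bij_comp[OF \<Phi>b[OF t(1) t(4)] Fq_lin_bij_inv[OF \<Psi>b[OF t(1) t(3)]]])
  have \<Phi>i0: "\<Phi> i 0 = 0" using Fq_lin_bij_0[OF \<Phi>b] ijk by simp
  have \<Phi>j0: "\<Phi> j 0 = 0" using Fq_lin_bij_0[OF \<Phi>b] ijk by simp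
  have \<Psi>i0: "\<Psi> i 0 = 0" using Fq_lin_bij_0[OF \<Psi>b] ijk by simp
  have \<Psi>k0: "\<Psi> k 0 = 0" using Fq_lin_bij_0[OF \<Psi>b] ijk by simp
  define \<kappa> where "\<kappa> l = u l * \<sigma> (u' t) / (u t * \<sigma> (u' l))" for l
  have kap: "\<Phi> l y = \<kappa> l * f (\<Psi> l y)" if l: "l < n" "l \<noteq> j" "l \<noteq> k" for l y
  proof -
    obtain d where d: "d \<in> C" "d ! j = 0" "d ! k = 0" "d ! l = y"
      using exist3[of j k l 0 0 y] ijk l by auto
    have F1: "\<Phi> l y = u l * \<Phi> i (d ! i)"
      using Coef_form[OF C\<Phi> l(1) l(3) d(1,3)] d \<Phi>j0 by simp
    have F2: "\<Phi> t (d ! t) = u t * \<Phi> i (d ! i)"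
      using Coef_form[OF C\<Phi> t(1) t(4) d(1,3)] d \<Phi>j0 by simp
    have P1: "\<Psi> l y = u' l * \<Psi> i (d ! i)"
      using Coef_form[OF C\<Psi> l(1) l(2) d(1,2)] d \<Psi>k0 by simp
    have P2: "\<Psi> t (d ! t) = u' t * \<Psi> i (d ! i)"
      using Coef_form[OF C\<Psi> t(1) t(3) d(1,2)] d \<Psi>k0 by simp
    have A: "f (\<Psi> l y) = \<sigma> (u' l) * f (\<Psi> i (d ! i))" using P1 fmul by simp
    have B: "\<Phi> t (d ! t) = \<sigma> (u' t) * f (\<Psi> i (d ! i))" using P2 fmul fPsi[of "d ! t"] by simp
    show ?thesis unfolding \<kappa>_def
      by (rule chain_aux[OF A B F2 F1]) (use \<sigma>0 Coef_u[OF C\<Psi>] Coef_u[OF C\<Phi>] l t in auto)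
  qed
  define \<xi> where "\<xi> l = (if l = k then f \<circ> \<Psi> k else \<Phi> l)" for l
  define lam where "lam l = (if l = k then 0 else u l)" for l
  define \<mu> where "\<mu> l = (if l = k then 0 else v l)" for l
  define \<nu> where "\<nu> l = (if l = k then 1 else if l = i \<or> l = j then 0 else \<kappa> l * \<sigma> (v' l))" for l
  have \<xi>b: "Fq_lin_bij q (\<xi> l)" if "l < n" for l
    unfolding \<xi>_def using that \<Phi>b Fq_lin_bij_comp[OF fb \<Psi>b[OF ijk(3) ijk(6)[symmetric]]] by auto
  have form: "\<xi> l (x ! l) = lam l * \<Phi> i (x ! i) + \<mu> l * \<Phi> j (x ! j) + \<nu> l * \<xi> k (x ! k)"
    if x: "x \<in> C" and l: "l < n" for x l
  proof (cases "l = k")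
    case True thus ?thesis by (simp add: lam_def \<mu>_def \<nu>_def)
  next
    case lk: False
    obtain xc where xc: "xc \<in> C" "xc ! i = 0" "xc ! j = 0" "xc ! k = x ! k"
      using exist3[of i j k 0 0 "x ! k"] ijk by auto
    define xab where "xab = sub x xc"
    have xab: "xab \<in> C" "xab ! k = 0" "xab ! i = x ! i" "xab ! j = x ! j"
      unfolding xab_def using subC[OF x xc(1)] nth_sub[OF x xc(1)] xc ijk by auto
    have xl: "x ! l = xab ! l + xc ! l" unfolding xab_def using nth_sub[OF x xc(1) l] by simp
    have "\<Phi> l (x ! l) = \<Phi> l (xab ! l) + \<Phi> l (xc ! l)"
      unfolding xl by (rule Fq_lin_bij_add[OF \<Phi>b[OF l lk]])
    also have "\<Phi> l (xab ! l) = u l * \<Phi> i (x ! i) + v l * \<Phi> j (x ! j)"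
      using Coef_form[OF C\<Phi> l lk xab(1,2)] xab by simp
    also have "\<Phi> l (xc ! l) = \<nu> l * f (\<Psi> k (x ! k))"
    proof (cases "l = i \<or> l = j")
      case True
      hence "xc ! l = 0" using xc by auto
      thus ?thesis using True Fq_lin_bij_0[OF \<Phi>b[OF l lk]] lk by (simp add: \<nu>_def)
    next
      case False
      hence lij: "l \<noteq> i" "l \<noteq> j" by auto
      have "\<Psi> l (xc ! l) = v' l * \<Psi> k (x ! k)"
        using Coef_form[OF C\<Psi> l lij(2) xc(1,3)] xc \<Psi>i0 by simp
      hence "\<Phi> l (xc ! l) = \<kappa> l * (\<sigma> (v' l) * f (\<Psi> k (x ! k)))"
        using kap[OF l lij(2) lk, of "xc ! l"] fmul by simp
      thus ?thesis using lij lk by (simp add: \<nu>_def)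
    qed
    finally show ?thesis using lk by (simp add: \<xi>_def lam_def \<mu>_def)
  qed
  define img where "img x = map (\<lambda>l. \<xi> l (x ! l)) [0..<n]" for x
  define D where "D = img ` C"
  have "linear_code n D" unfolding linear_code_def
  proof (intro conjI ballI allI)
    show "D \<subseteq> {x. length x = n}" unfolding D_def img_def by auto
    have "img z0 = replicate n 0" unfolding img_def
      by (rule nth_equalityI) (auto simp: Fq_lin_bij_0[OF \<xi>b])
    thus "replicate n 0 \<in> D" unfolding D_def using zeroC by (metis image_eqI)
  next
    fix a b assume "a \<in> D" "b \<in> D"
    then obtain x y where xy: "x \<in> C" "y \<in> C" "a = img x" "b = img y" unfolding D_def by blast
    have "map2 (+) (img x) (img y) = img (map2 (+) x y)" unfolding img_def
      by (rule nth_equalityI) (auto simp: nth_add[OF xy(1,2)] Fq_lin_bij_add[OF \<xi>b])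
    thus "map2 (+) a b \<in> D" unfolding D_def using addC[OF xy(1,2)] xy by simp
  next
    fix c' a assume "a \<in> D"
    then obtain x where x: "x \<in> C" "a = img x" unfolding D_def by blast
    obtain y where y: "y \<in> C" "y ! i = inv (\<Phi> i) (c' * \<Phi> i (x ! i))" "y ! j = inv (\<Phi> j) (c' * \<Phi> j (x ! j))"
      "y ! k = inv (\<xi> k) (c' * \<xi> k (x ! k))"
      using exist3[OF ijk] by blast
    have yi: "\<Phi> i (y ! i) = c' * \<Phi> i (x ! i)" using y(2) Fq_lin_bij_f_inv[OF \<Phi>b[OF ijk(1) ijk(5)]] by simp
    have yj: "\<Phi> j (y ! j) = c' * \<Phi> j (x ! j)" using y(3) Fq_lin_bij_f_inv[OF \<Phi>b[OF ijk(2) ijk(6)]] by simp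
    have yk: "\<xi> k (y ! k) = c' * \<xi> k (x ! k)" using y(4) Fq_lin_bij_f_inv[OF \<xi>b[OF ijk(3)]] by simp
    have "img y = map (\<lambda>t. c' * t) (img x)" unfolding img_def
    proof (rule nth_equalityI)
      fix l assume "l < length (map (\<lambda>l. \<xi> l (y ! l)) [0..<n])"
      hence l: "l < n" by simp
      have "\<xi> l (y ! l) = c' * \<xi> l (x ! l)"
        using form[OF y(1) l] form[OF x(1) l] yi yj yk by (simp add: algebra_simps)
      thus "map (\<lambda>l. \<xi> l (y ! l)) [0..<n] ! l = map (\<lambda>t. c' * t) (map (\<lambda>l. \<xi> l (x ! l)) [0..<n]) ! l"
        using l by simp
    qed simp
    thus "map (\<lambda>t. c' * t) a \<in> D" unfolding D_def using y(1) x(2) by (metis image_eqI)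
  qed
  moreover have "Fq_equiv q n C D" unfolding Fq_equiv_def
    by (intro exI[of _ id] exI[of _ \<xi>] conjI) (auto simp: D_def img_def permutes_id \<xi>b)
  ultimately show ?thesis by blast
qed

end

theorem lemma5p10:
  fixes q h m n :: nat and C :: "'a::{finite,field} list set"
  assumes "prime_power q" and "h \<ge> 1" and "m \<ge> 1"
    and "card (UNIV :: 'a set) = q ^ h"
    and "\<forall>f g :: nat \<Rightarrow> 'a. lin_invertible q h f \<and> lin_invertible q h g \<and> Prop q h m f g
            \<longrightarrow> lin_monomial h f \<and> lin_monomial h g"
    and "Fq_linear_code q n C" and "card C = q ^ (3 * h)" and "min_dist C = n - 2"
    and "n \<ge> 3 + m"
    and "\<exists>i j k. i < n \<and> j < n \<and> k < n \<and> i \<noteq> j \<and> i \<noteq> k \<and> j \<noteq> k \<and>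
           (\<forall>l\<in>{i, j, k}. \<exists>D. linear_code (n - 1) D \<and> Fq_equiv q (n - 1) (projection l C) D)"
  shows "\<exists>D. linear_code n D \<and> Fq_equiv q n C D"
proof -
  interpret codeset q h "TYPE('a)" n C
    by unfold_locales (use assms in auto)
  obtain i j k where ijk: "i < n" "j < n" "k < n" "i \<noteq> j" "i \<noteq> k" "j \<noteq> k"
    and P: "\<forall>l\<in>{i, j, k}. \<exists>D. linear_code (n - 1) D \<and> Fq_equiv q (n - 1) (projection l C) D"
    using assms(10) by blast
  obtain Dk where Dk: "linear_code (n - 1) Dk" "Fq_equiv q (n - 1) (projection k C) Dk" using P by blast
  obtain Dj where Dj: "linear_code (n - 1) Dj" "Fq_equiv q (n - 1) (projection j C) Dj" using P by blast
  obtain Di where Di: "linear_code (n - 1) Di" "Fq_equiv q (n - 1) (projection i C) Di" using P by blast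
  obtain \<Phi> where L\<Phi>: "LinP k \<Phi>" using proj_Lin[OF ijk(3) Dk] by blast
  obtain \<Psi> where L\<Psi>: "LinP j \<Psi>" using proj_Lin[OF ijk(2) Dj] by blast
  obtain \<Omega> where L\<Omega>: "LinP i \<Omega>" using proj_Lin[OF ijk(1) Di] by blast
  obtain u v where C\<Phi>: "Coef k i j \<Phi> u v"
    using Coef_ex[OF ijk L\<Phi>] by blast
  obtain u' v' where C\<Psi>: "Coef j i k \<Psi> u' v'"
    using Coef_ex[of i k j \<Psi>] ijk L\<Psi> by auto
  obtain u'' v'' where C\<Omega>: "Coef i j k \<Omega> u'' v''"
    using Coef_ex[of j k i \<Omega>] ijk L\<Omega> by auto
  obtain t s c where t: "t < n" "t \<noteq> i" "t \<noteq> j" "t \<noteq> k" and c: "c \<noteq> 0"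
    and ff: "\<forall>y. \<Phi> t (inv (\<Psi> t) y) = c * y ^ (q ^ s)"
    using main_A[OF ijk assms(3) assms(9) assms(5) L\<Phi> L\<Psi> L\<Omega> C\<Phi> C\<Psi> C\<Omega>] by blast
  show ?thesis by (rule main_B[OF ijk L\<Phi> L\<Psi> C\<Phi> C\<Psi> t c ff])
qed

end
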